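(* Every Bohr regular Lawson paratopological group is a topological group.
   Context: All topological spaces are Hausdorff. A paratopological group is a group with a Hausdorff topology making multiplication continuous; a topological group additionally has continuous inversion. A paratopological group is Lawson if it has a neighborhood base at the unit consisting of subsemigroups. A topological group $K$ is totally bounded if for each neighborhood $U$ of the unit there is a finite $F$ with $FU=UF=K$. A continuous map $h:X\to Y$ is regular if for each $x\in X$ and neighborhood $U$ of $x$ there is a closed $F\subset Y$ such that $h^{-1}(F)$ is a closed neighborhood of $x$ contained in $U$. A paratopological group is Bohr regular if it admits a regular continuous homomorphism onto a totally bounded topological group. *)

theory Defs
  imports "HOL-Analysis.Analysis" "HOL-Algebra.Coset"
begin

definition nbhd :: "'a topology \<Rightarrow> 'a \<Rightarrow> 'a set \<Rightarrow> bool" where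
  "nbhd T x V \<longleftrightarrow> V \<subseteq> topspace T \<and> x \<in> T interior_of V"

definition paratopological_group :: "('a, 'm) monoid_scheme \<Rightarrow> 'a topology \<Rightarrow> bool" where
  "paratopological_group G T \<longleftrightarrow>
     group G \<and> topspace T = carrier G \<and> Hausdorff_space T \<and>
     continuous_map (prod_topology T T) T (\<lambda>p. fst p \<otimes>\<^bsub>G\<^esub> snd p)"

definition topological_group :: "('a, 'm) monoid_scheme \<Rightarrow> 'a topology \<Rightarrow> bool" where
  "topological_group G T \<longleftrightarrow>
     paratopological_group G T \<and> continuous_map T T (\<lambda>x. inv\<^bsub>G\<^esub> x)"

definition lawson_group :: "('a, 'm) monoid_scheme \<Rightarrow> 'a topology \<Rightarrow> bool" where
  "lawson_group G T \<longleftrightarrow>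
     paratopological_group G T \<and>
     (\<forall>U. nbhd T \<one>\<^bsub>G\<^esub> U \<longrightarrow>
        (\<exists>V. nbhd T \<one>\<^bsub>G\<^esub> V \<and> V \<subseteq> U \<and>
             (\<forall>x\<in>V. \<forall>y\<in>V. x \<otimes>\<^bsub>G\<^esub> y \<in> V)))"

definition totally_bounded_group :: "('a, 'm) monoid_scheme \<Rightarrow> 'a topology \<Rightarrow> bool" where
  "totally_bounded_group K S \<longleftrightarrow>
     topological_group K S \<and>
     (\<forall>U. nbhd S \<one>\<^bsub>K\<^esub> U \<longrightarrow>
        (\<exists>F. finite F \<and> F \<subseteq> carrier K \<and>
             F <#>\<^bsub>K\<^esub> U = carrier K \<and> U <#>\<^bsub>K\<^esub> F = carrier K))"

definition regular_map :: "'a topology \<Rightarrow> 'b topology \<Rightarrow> ('a \<Rightarrow> 'b) \<Rightarrow> bool" where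
  "regular_map X Y h \<longleftrightarrow>
     continuous_map X Y h \<and>
     (\<forall>x\<in>topspace X. \<forall>U. nbhd X x U \<longrightarrow>
        (\<exists>F. closedin Y F \<and>
             closedin X {z \<in> topspace X. h z \<in> F} \<and>
             nbhd X x {z \<in> topspace X. h z \<in> F} \<and>
             {z \<in> topspace X. h z \<in> F} \<subseteq> U))"

definition bohr_regular_via ::
  "('a, 'm) monoid_scheme \<Rightarrow> 'a topology \<Rightarrow> ('b, 'n) monoid_scheme \<Rightarrow> 'b topology \<Rightarrow> ('a \<Rightarrow> 'b) \<Rightarrow> bool" where
  "bohr_regular_via G T K S h \<longleftrightarrow>
     paratopological_group G T \<and> totally_bounded_group K S \<and>
     h \<in> hom G K \<and> h ` carrier G = carrier K \<and> regular_map T S h"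

end

theory Submission
  imports Defs
begin

lemma para_group: "paratopological_group G T \<Longrightarrow> group G"
  by (simp add: paratopological_group_def)

lemma left_transl_cont:
  assumes "paratopological_group G T" "a \<in> carrier G"
  shows "continuous_map T T (\<lambda>z. a \<otimes>\<^bsub>G\<^esub> z)"
proof -
  have m: "continuous_map (prod_topology T T) T (\<lambda>p. fst p \<otimes>\<^bsub>G\<^esub> snd p)"
    and ts: "topspace T = carrier G"
    using assms(1) by (auto simp: paratopological_group_def)
  have "continuous_map T (prod_topology T T) (\<lambda>z. (a, z))"
    by (intro continuous_map_pairedI) (auto simp: ts assms(2))
  from continuous_map_compose[OF this m] show ?thesis by (simp add: o_def)
qed

lemma right_transl_cont:
  assumes "paratopological_group G T" "a \<in> carrier G"
  shows "continuous_map T T (\<lambda>z. z \<otimes>\<^bsub>G\<^esub> a)"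
proof -
  have m: "continuous_map (prod_topology T T) T (\<lambda>p. fst p \<otimes>\<^bsub>G\<^esub> snd p)"
    and ts: "topspace T = carrier G"
    using assms(1) by (auto simp: paratopological_group_def)
  have "continuous_map T (prod_topology T T) (\<lambda>z. (z, a))"
    by (intro continuous_map_pairedI) (auto simp: ts assms(2))
  from continuous_map_compose[OF this m] show ?thesis by (simp add: o_def)
qed

lemma preimage_open:
  assumes "continuous_map T T f" "openin T U"
  shows "openin T {z \<in> topspace T. f z \<in> U}"
  using assms by (simp add: continuous_map_def)

lemma power_in_open:
  assumes tb: "totally_bounded_group K S" and y: "y \<in> carrier K"
    and Ob: "openin S Ob" "inv\<^bsub>K\<^esub> y \<in> Ob"
  shows "\<exists>m\<ge>1. y [^]\<^bsub>K\<^esub> (m::nat) \<in> Ob"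
proof -
  have tg: "topological_group K S" using tb by (simp add: totally_bounded_group_def)
  have pg: "paratopological_group K S" using tg by (simp add: topological_group_def)
  have grp: "group K" using pg by (simp add: paratopological_group_def)
  interpret K: group K by (rule grp)
  have ts: "topspace S = carrier K"
    and m: "continuous_map (prod_topology S S) S (\<lambda>p. fst p \<otimes>\<^bsub>K\<^esub> snd p)"
    using pg by (auto simp: paratopological_group_def)
  have iv: "continuous_map S S (\<lambda>x. inv\<^bsub>K\<^esub> x)" using tg by (simp add: topological_group_def)
  define OO2 where "OO2 = {g \<in> topspace S. inv\<^bsub>K\<^esub> y \<otimes>\<^bsub>K\<^esub> g \<in> Ob}"
  have OO2o: "openin S OO2" unfolding OO2_def
    by (rule preimage_open[OF left_transl_cont[OF pg] Ob(1)]) (simp add: y)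
  have "continuous_map (prod_topology S S) (prod_topology S S) (\<lambda>p. (inv\<^bsub>K\<^esub> (fst p), snd p))"
    by (intro continuous_map_pairedI continuous_map_compose[OF continuous_map_fst iv, unfolded o_def]
        continuous_map_snd)
  from continuous_map_compose[OF this m]
  have phi: "continuous_map (prod_topology S S) S (\<lambda>p. inv\<^bsub>K\<^esub> (fst p) \<otimes>\<^bsub>K\<^esub> snd p)"
    by (simp add: o_def)
  define Q where "Q = {p \<in> topspace (prod_topology S S). inv\<^bsub>K\<^esub> (fst p) \<otimes>\<^bsub>K\<^esub> snd p \<in> OO2}"
  have Qo: "openin (prod_topology S S) Q" unfolding Q_def
    using phi OO2o by (simp add: continuous_map_def)
  have "(\<one>\<^bsub>K\<^esub>, \<one>\<^bsub>K\<^esub>) \<in> Q"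
    using Ob by (simp add: Q_def OO2_def ts y)
  then obtain A B where AB: "openin S A" "openin S B" "\<one>\<^bsub>K\<^esub> \<in> A" "\<one>\<^bsub>K\<^esub> \<in> B" "A \<times> B \<subseteq> Q"
    using Qo unfolding openin_prod_topology_alt by blast
  define P where "P = A \<inter> B"
  have Po: "openin S P" using AB by (simp add: P_def openin_Int)
  have "nbhd S \<one>\<^bsub>K\<^esub> P"
    using Po AB by (simp add: nbhd_def P_def openin_subset interior_of_openin Int_absorb1 openin_Int)
  then obtain F where F: "finite F" "F \<subseteq> carrier K" "F <#>\<^bsub>K\<^esub> P = carrier K"
    using tb unfolding totally_bounded_group_def by blast
  have Psub: "P \<subseteq> carrier K" using Po openin_subset ts by blast
  have key: "\<And>a b. a \<in> P \<Longrightarrow> b \<in> P \<Longrightarrow> inv\<^bsub>K\<^esub> a \<otimes>\<^bsub>K\<^esub> b \<in> OO2"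
    using AB(5) by (auto simp: P_def Q_def)
  have ex: "\<forall>k::nat. \<exists>f\<in>F. \<exists>p\<in>P. y [^]\<^bsub>K\<^esub> (2*k) = f \<otimes>\<^bsub>K\<^esub> p"
  proof
    fix k :: nat
    have "y [^]\<^bsub>K\<^esub> (2*k) \<in> F <#>\<^bsub>K\<^esub> P" using F(3) y by simp
    then show "\<exists>f\<in>F. \<exists>p\<in>P. y [^]\<^bsub>K\<^esub> (2*k) = f \<otimes>\<^bsub>K\<^esub> p"
      unfolding set_mult_def by blast
  qed
  then obtain c where c: "\<And>k::nat. c k \<in> F" "\<And>k::nat. \<exists>p\<in>P. y [^]\<^bsub>K\<^esub> (2*k) = c k \<otimes>\<^bsub>K\<^esub> p"
    by metis
  have "\<not> inj_on c {0..card F}"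
  proof
    assume "inj_on c {0..card F}"
    from card_inj_on_le[OF this _ F(1)] c(1) have "card {0..card F} \<le> card F" by blast
    then show False by simp
  qed
  then obtain i j where ij: "i < j" "c i = c j"
    unfolding inj_on_def by (metis linorder_neqE_nat)
  obtain p1 where p1: "p1 \<in> P" "y [^]\<^bsub>K\<^esub> (2*i) = c i \<otimes>\<^bsub>K\<^esub> p1" using c(2) by blast
  obtain p2 where p2: "p2 \<in> P" "y [^]\<^bsub>K\<^esub> (2*j) = c i \<otimes>\<^bsub>K\<^esub> p2" using c(2) ij(2) by metis
  have fc: "c i \<in> carrier K" using c(1) F(2) by blast
  have p1c: "p1 \<in> carrier K" and p2c: "p2 \<in> carrier K" using p1 p2 Psub by auto
  define d where "d = j - i"
  have d: "d \<ge> 1" "2*j = 2*i + 2*d" using ij by (auto simp: d_def)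
  have "inv\<^bsub>K\<^esub> p1 \<otimes>\<^bsub>K\<^esub> p2 = inv\<^bsub>K\<^esub> (y [^]\<^bsub>K\<^esub> (2*i)) \<otimes>\<^bsub>K\<^esub> y [^]\<^bsub>K\<^esub> (2*j)"
  proof -
    have "inv\<^bsub>K\<^esub> (c i \<otimes>\<^bsub>K\<^esub> p1) \<otimes>\<^bsub>K\<^esub> (c i \<otimes>\<^bsub>K\<^esub> p2)
        = inv\<^bsub>K\<^esub> p1 \<otimes>\<^bsub>K\<^esub> ((inv\<^bsub>K\<^esub> (c i) \<otimes>\<^bsub>K\<^esub> c i) \<otimes>\<^bsub>K\<^esub> p2)"
      using fc p1c p2c by (simp add: K.inv_mult_group K.m_assoc) (metis K.inv_closed K.l_inv K.l_one K.m_assoc)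
    also have "\<dots> = inv\<^bsub>K\<^esub> p1 \<otimes>\<^bsub>K\<^esub> p2" using fc p2c by (simp add: K.l_inv)
    finally show ?thesis using p1 p2 by simp
  qed
  also have "\<dots> = y [^]\<^bsub>K\<^esub> (2*d)"
    using y by (simp add: d(2) K.nat_pow_mult[symmetric] K.m_assoc[symmetric] K.l_inv)
  finally have "y [^]\<^bsub>K\<^esub> (2*d) \<in> OO2" using key[OF p1(1) p2(1)] by simp
  then have "inv\<^bsub>K\<^esub> y \<otimes>\<^bsub>K\<^esub> y [^]\<^bsub>K\<^esub> (2*d) \<in> Ob" by (simp add: OO2_def)
  moreover have "inv\<^bsub>K\<^esub> y \<otimes>\<^bsub>K\<^esub> y [^]\<^bsub>K\<^esub> (2*d) = y [^]\<^bsub>K\<^esub> (2*d - 1)"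
  proof -
    have "2*d = Suc (2*d-1)" using d by simp
    then have "y [^]\<^bsub>K\<^esub> (2*d) = y \<otimes>\<^bsub>K\<^esub> y [^]\<^bsub>K\<^esub> (2*d - 1)"
      using y by (metis K.nat_pow_Suc2)
    then show ?thesis using y by (simp add: K.m_assoc[symmetric] K.l_inv)
  qed
  ultimately show ?thesis using d by (intro exI[of _ "2*d - 1"]) auto
qed

theorem corollary8:
  fixes G :: "'a monoid" and T :: "'a topology"
  assumes "\<exists>(K :: 'b monoid) S h. bohr_regular_via G T K S h"
    and "lawson_group G T"
  shows "topological_group G T"
proof -
  obtain K :: "'b monoid" and S h where br: "bohr_regular_via G T K S h" using assms(1) by blast
  have pg: "paratopological_group G T" and tb: "totally_bounded_group K S"
    and hom: "h \<in> hom G K" and rm: "regular_map T S h"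
    using br by (auto simp: bohr_regular_via_def)
  interpret G: group G using pg by (simp add: paratopological_group_def)
  have tgK: "topological_group K S" using tb by (simp add: totally_bounded_group_def)
  have grpK: "group K" using tgK by (simp add: topological_group_def paratopological_group_def)
  interpret K: group K by (rule grpK)
  interpret hG: group_hom G K h by (unfold_locales) (rule hom)
  have tsK: "topspace S = carrier K"
    using tgK by (simp add: topological_group_def paratopological_group_def)
  have ts: "topspace T = carrier G" using pg by (simp add: paratopological_group_def)
  have main: "\<exists>W. nbhd T \<one>\<^bsub>G\<^esub> W \<and> (\<forall>w\<in>W. inv\<^bsub>G\<^esub> w \<in> U)"
    if U: "openin T U" "\<one>\<^bsub>G\<^esub> \<in> U" for U
  proof -
    have "nbhd T \<one>\<^bsub>G\<^esub> U" using U by (simp add: nbhd_def openin_subset interior_of_openin)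
    then obtain F where F: "closedin S F" "nbhd T \<one>\<^bsub>G\<^esub> {z \<in> topspace T. h z \<in> F}"
      "{z \<in> topspace T. h z \<in> F} \<subseteq> U"
      using rm unfolding regular_map_def by (metis G.one_closed ts)
    define H where "H = {z \<in> topspace T. h z \<in> F}"
    obtain W where W: "nbhd T \<one>\<^bsub>G\<^esub> W" "W \<subseteq> H" "\<forall>x\<in>W. \<forall>y\<in>W. x \<otimes>\<^bsub>G\<^esub> y \<in> W"
      using assms(2) F(2) unfolding lawson_group_def H_def by blast
    have Wc: "W \<subseteq> carrier G" using W(1) by (simp add: nbhd_def ts)
    have pw: "w [^]\<^bsub>G\<^esub> (m::nat) \<in> W" if "w \<in> W" "m \<ge> 1" for w m
      using that(2)
    proof (induction m)
      case 0 then show ?case by simp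
    next
      case (Suc m)
      show ?case
      proof (cases "m = 0")
        case True then show ?thesis using that(1) Wc by auto
      next
        case False
        then have "w [^]\<^bsub>G\<^esub> m \<in> W" using Suc by simp
        then show ?thesis using W(3) that(1) by simp
      qed
    qed
    have "inv\<^bsub>G\<^esub> w \<in> U" if w: "w \<in> W" for w
    proof -
      have wc: "w \<in> carrier G" using w Wc by blast
      have "inv\<^bsub>K\<^esub> (h w) \<in> F"
      proof (rule ccontr)
        assume "inv\<^bsub>K\<^esub> (h w) \<notin> F"
        moreover have "openin S (topspace S - F)" using F(1) by (simp add: closedin_def)
        moreover have "inv\<^bsub>K\<^esub> (h w) \<in> topspace S" using wc tsK by simp
        ultimately obtain m :: nat where m: "m \<ge> 1" "h w [^]\<^bsub>K\<^esub> m \<in> topspace S - F"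
          using power_in_open[OF tb, of "h w" "topspace S - F"] wc by auto
        have "w [^]\<^bsub>G\<^esub> m \<in> H" using pw[OF w m(1)] W(2) by blast
        then have "h (w [^]\<^bsub>G\<^esub> m) \<in> F" by (simp add: H_def)
        then show False using m(2) hG.hom_nat_pow[OF wc] by simp
      qed
      then have "h (inv\<^bsub>G\<^esub> w) \<in> F" using hG.hom_inv[OF wc] by simp
      then have "inv\<^bsub>G\<^esub> w \<in> H" using wc ts by (simp add: H_def)
      then show ?thesis using F(3) H_def by blast
    qed
    then show ?thesis using W(1) by blast
  qed
  have "continuous_map T T (\<lambda>x. inv\<^bsub>G\<^esub> x)"
    unfolding continuous_map_def
  proof (intro conjI allI impI funcsetI)
    fix x assume "x \<in> topspace T" then show "inv\<^bsub>G\<^esub> x \<in> topspace T" using ts by simp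
  next
    fix U assume U: "openin T U"
    show "openin T {x \<in> topspace T. inv\<^bsub>G\<^esub> x \<in> U}"
      unfolding openin_subopen[of T "{x \<in> topspace T. inv\<^bsub>G\<^esub> x \<in> U}"]
    proof
      fix x assume "x \<in> {x \<in> topspace T. inv\<^bsub>G\<^esub> x \<in> U}"
      then have x: "x \<in> carrier G" "inv\<^bsub>G\<^esub> x \<in> U" using ts by auto
      define U1 where "U1 = {g \<in> topspace T. g \<otimes>\<^bsub>G\<^esub> inv\<^bsub>G\<^esub> x \<in> U}"
      have U1o: "openin T U1" unfolding U1_def
        by (rule preimage_open[OF right_transl_cont[OF pg G.inv_closed[OF x(1)]] U])
      have "\<one>\<^bsub>G\<^esub> \<in> U1" using x ts by (simp add: U1_def)
      then obtain W where W: "nbhd T \<one>\<^bsub>G\<^esub> W" "\<forall>w\<in>W. inv\<^bsub>G\<^esub> w \<in> U1"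
        using main[OF U1o] by blast
      define I where "I = T interior_of W"
      have Io: "openin T I" by (simp add: I_def)
      have IW: "I \<subseteq> W" by (simp add: I_def interior_of_subset)
      define N where "N = {z \<in> topspace T. inv\<^bsub>G\<^esub> x \<otimes>\<^bsub>G\<^esub> z \<in> I}"
      have No: "openin T N" unfolding N_def
        by (rule preimage_open[OF left_transl_cont[OF pg] Io]) (simp add: x)
      have xN: "x \<in> N" using W(1) x ts by (simp add: N_def I_def nbhd_def)
      have "N \<subseteq> {x \<in> topspace T. inv\<^bsub>G\<^esub> x \<in> U}"
      proof
        fix z assume z: "z \<in> N"
        then have zc: "z \<in> carrier G" and zI: "inv\<^bsub>G\<^esub> x \<otimes>\<^bsub>G\<^esub> z \<in> W"
          using ts IW by (auto simp: N_def)
        have "inv\<^bsub>G\<^esub> (inv\<^bsub>G\<^esub> x \<otimes>\<^bsub>G\<^esub> z) \<in> U1" using W(2) zI by blast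
        then have "inv\<^bsub>G\<^esub> (inv\<^bsub>G\<^esub> x \<otimes>\<^bsub>G\<^esub> z) \<otimes>\<^bsub>G\<^esub> inv\<^bsub>G\<^esub> x \<in> U" by (simp add: U1_def)
        moreover have "inv\<^bsub>G\<^esub> (inv\<^bsub>G\<^esub> x \<otimes>\<^bsub>G\<^esub> z) \<otimes>\<^bsub>G\<^esub> inv\<^bsub>G\<^esub> x = inv\<^bsub>G\<^esub> z"
          using x zc by (simp add: G.inv_mult_group G.m_assoc)
        ultimately show "z \<in> {x \<in> topspace T. inv\<^bsub>G\<^esub> x \<in> U}" using zc ts by simp
      qed
      then show "\<exists>T'. openin T T' \<and> x \<in> T' \<and> T' \<subseteq> {x \<in> topspace T. inv\<^bsub>G\<^esub> x \<in> U}"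
        using No xN by blast
    qed
  qed
  then show ?thesis using pg by (simp add: topological_group_def)
qed

end
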